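(* Let $N\ge1$, $k\in\mathbb{Z}$, and let $\psi$ be a Dirichlet character modulo $N$ with $\psi(-1)=(-1)^k$, induced by a primitive character of conductor $N^*\mid N$. Then the number of $\Gamma_0(N)$-inequivalent cusps of $\Gamma_0(N)$ that are singular for $\psi$ equals \[ \sum_{\substack{f\mid N\\ (f,N/f)\mid \frac{N}{N^*}}}\varphi\big((f,N/f)\big). \]
   Context: For $\gamma=\begin{pmatrix}a&b\\c&d\end{pmatrix}\in\Gamma_0(N)$ write $\psi(\gamma)=\psi(d)$. For a cusp $\mathfrak{a}$ of $\Gamma_0(N)$ with stabilizer $\Gamma_{\mathfrak a}$, choose $\sigma_{\mathfrak a}\in SL_2(\mathbb{R})$ with $\sigma_{\mathfrak a}\infty=\mathfrak a$ and $\sigma_{\mathfrak a}^{-1}\Gamma_{\mathfrak a}\sigma_{\mathfrak a}=\{\pm\begin{pmatrix}1&n\\0&1\end{pmatrix}\}$, and let $\tau_{\mathfrak a}=\sigma_{\mathfrak a}\begin{pmatrix}1&1\\0&1\end{pmatrix}\sigma_{\mathfrak a}^{-1}$. The cusp $\mathfrak a$ is singular for $\psi$ if $\psi(\tau_{\mathfrak a})=1$ (this depends only on the $\Gamma_0(N)$-class of $\mathfrak a$). $\varphi$ is Euler's function. *)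

theory Defs
  imports Complex_Main "HOL-Number_Theory.Number_Theory"
begin

definition dirichlet_char :: "nat \<Rightarrow> (int \<Rightarrow> complex) \<Rightarrow> bool" where
  "dirichlet_char M \<chi> \<longleftrightarrow> M \<ge> 1 \<and>
     (\<forall>n. \<chi> (n + int M) = \<chi> n) \<and>
     (\<forall>m n. \<chi> (m * n) = \<chi> m * \<chi> n) \<and>
     \<chi> 1 = 1 \<and>
     (\<forall>n. \<chi> n = 0 \<longleftrightarrow> \<not> coprime n (int M))"

definition primitive_char :: "nat \<Rightarrow> (int \<Rightarrow> complex) \<Rightarrow> bool" where
  "primitive_char M \<chi> \<longleftrightarrow> dirichlet_char M \<chi> \<and>
     \<not> (\<exists>d. d dvd M \<and> d < M \<and>
           (\<forall>n. coprime n (int M) \<and> [n = 1] (mod int d) \<longrightarrow> \<chi> n = 1))"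

definition induced_by_primitive :: "nat \<Rightarrow> (int \<Rightarrow> complex) \<Rightarrow> nat \<Rightarrow> bool" where
  "induced_by_primitive N \<chi> Nstar \<longleftrightarrow> Nstar dvd N \<and>
     (\<exists>\<chi>'. primitive_char Nstar \<chi>' \<and>
        (\<forall>n. \<chi> n = (if coprime n (int N) then \<chi>' n else 0)))"

type_synonym mat2 = "real \<times> real \<times> real \<times> real"

fun mmul :: "mat2 \<Rightarrow> mat2 \<Rightarrow> mat2" where
  "mmul (a,b,c,d) (a',b',c',d') = (a*a' + b*c', a*b' + b*d', c*a' + d*c', c*b' + d*d')"

fun mdet :: "mat2 \<Rightarrow> real" where
  "mdet (a,b,c,d) = a*d - b*c"

text \<open>Inverse of a determinant-one matrix.\<close>
fun minv :: "mat2 \<Rightarrow> mat2" where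
  "minv (a,b,c,d) = (d, -b, -c, a)"

definition SL2R :: "mat2 set" where
  "SL2R = {M. mdet M = 1}"

text \<open>Points of the extended real line: None is infinity.\<close>
fun mob :: "mat2 \<Rightarrow> real option \<Rightarrow> real option" where
  "mob (a,b,c,d) None = (if c = 0 then None else Some (a / c))"
| "mob (a,b,c,d) (Some x) = (if c * x + d = 0 then None else Some ((a*x + b) / (c*x + d)))"

definition Gamma0 :: "nat \<Rightarrow> mat2 set" where
  "Gamma0 N = {M. \<exists>a b c d :: int. M = (of_int a, of_int b, of_int c, of_int d) \<and>
                   a*d - b*c = 1 \<and> int N dvd c}"

definition Tmat :: mat2 where "Tmat = (1, 1, 0, 1)"

text \<open>psi(gamma) = psi(d) for gamma = (a,b,c,d) in Gamma0(N).\<close>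
definition psi_mat :: "(int \<Rightarrow> complex) \<Rightarrow> mat2 \<Rightarrow> complex" where
  "psi_mat \<psi> M = \<psi> \<lfloor>snd (snd (snd M))\<rfloor>"

text \<open>Cusps: points of P^1(Q), i.e. infinity or rationals.\<close>
definition is_cusp :: "real option \<Rightarrow> bool" where
  "is_cusp z \<longleftrightarrow> z = None \<or> (\<exists>r\<in>\<rat>. z = Some r)"

definition cusp_equiv :: "nat \<Rightarrow> real option \<Rightarrow> real option \<Rightarrow> bool" where
  "cusp_equiv N z w \<longleftrightarrow> (\<exists>\<gamma>\<in>Gamma0 N. mob \<gamma> z = w)"

definition stabilizer :: "nat \<Rightarrow> real option \<Rightarrow> mat2 set" where
  "stabilizer N z = {\<gamma>\<in>Gamma0 N. mob \<gamma> z = z}"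

definition scaling_matrix :: "nat \<Rightarrow> real option \<Rightarrow> mat2 \<Rightarrow> bool" where
  "scaling_matrix N z \<sigma> \<longleftrightarrow> \<sigma> \<in> SL2R \<and> mob \<sigma> None = z \<and>
     (\<lambda>\<gamma>. mmul (minv \<sigma>) (mmul \<gamma> \<sigma>)) ` stabilizer N z =
       {(1, of_int n, 0, 1) | n. True} \<union> {(-1, - of_int n, 0, -1) | n. True}"

definition tau :: "mat2 \<Rightarrow> mat2" where
  "tau \<sigma> = mmul \<sigma> (mmul Tmat (minv \<sigma>))"

definition singular_cusp :: "nat \<Rightarrow> (int \<Rightarrow> complex) \<Rightarrow> real option \<Rightarrow> bool" where
  "singular_cusp N \<psi> z \<longleftrightarrow> (\<exists>\<sigma>. scaling_matrix N z \<sigma> \<and> psi_mat \<psi> (tau \<sigma>) = 1)"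

definition singular_cusp_classes :: "nat \<Rightarrow> (int \<Rightarrow> complex) \<Rightarrow> real option set set" where
  "singular_cusp_classes N \<psi> =
     {{w. cusp_equiv N z w} | z. is_cusp z \<and> singular_cusp N \<psi> z}"

end

theory Submission
  imports Defs
begin

definition cp :: "real \<Rightarrow> real \<Rightarrow> real option" where
  "cp x y = (if y = 0 then None else Some (x / y))"

lemma mob_cp:
  assumes "x \<noteq> 0 \<or> y \<noteq> 0"
  shows "mob (p,q,r,s) (cp x y) = cp (p*x + q*y) (r*x + s*y)"
proof (cases "y = 0")
  case True
  then show ?thesis using assms by (auto simp: cp_def)
next
  case False
  have e: "r * x / y + s = (r*x + s*y) / y" using False by (simp add: field_simps)
  have e2: "p * x / y + q = (p*x + q*y) / y" using False by (simp add: field_simps)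
  show ?thesis using False by (auto simp: cp_def e e2)
qed

lemma cp_cases: obtains x y where "x \<noteq> 0 \<or> y \<noteq> 0" "z = cp x y"
proof (cases z)
  case None
  then show ?thesis using that[of 1 0] by (simp add: cp_def)
next
  case (Some t)
  then show ?thesis using that[of t 1] by (simp add: cp_def)
qed

lemma cp_scale: "t \<noteq> 0 \<Longrightarrow> cp (t*x) (t*y) = cp x y"
  by (simp add: cp_def)

lemma mmul_assoc: "mmul A (mmul B C) = mmul (mmul A B) C"
  by (cases A; cases B; cases C) (simp add: algebra_simps)

lemma mob_mmul:
  assumes "mdet B \<noteq> 0"
  shows "mob (mmul A B) z = mob A (mob B z)"
proof -
  obtain x y where xy: "x \<noteq> 0 \<or> y \<noteq> 0" "z = cp x y" by (rule cp_cases)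
  obtain p q r s where B: "B = (p,q,r,s)" by (cases B) auto
  obtain p' q' r' s' where A: "A = (p',q',r',s')" by (cases A) auto
  have det: "p*s - q*r \<noteq> 0" using assms B by simp
  have nz: "p*x + q*y \<noteq> 0 \<or> r*x + s*y \<noteq> 0"
  proof (rule ccontr)
    assume "\<not> ?thesis"
    then have h1: "p*x + q*y = 0" and h2: "r*x + s*y = 0" by auto
    have "(p*s - q*r) * x = s*(p*x+q*y) - q*(r*x+s*y)" by (simp add: algebra_simps)
    also have "\<dots> = 0" using h1 h2 by simp
    finally have "x = 0" using det by simp
    have "(p*s - q*r) * y = p*(r*x+s*y) - r*(p*x+q*y)" by (simp add: algebra_simps)
    also have "\<dots> = 0" using h1 h2 by simp
    finally have "y = 0" using det by simp
    with \<open>x = 0\<close> xy show False by simp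
  qed
  show ?thesis unfolding xy(2) A B
    using xy(1) nz by (simp add: mob_cp algebra_simps)
qed

lemma mob_id: "mob (1,0,0,1) z = z"
  by (cases z) auto

lemma Gamma0_det: "\<gamma> \<in> Gamma0 N \<Longrightarrow> mdet \<gamma> = 1"
  unfolding Gamma0_def
  by auto (metis of_int_1 of_int_diff of_int_mult)

lemma Gamma0_I: "(1,0,0,1) \<in> Gamma0 N"
  unfolding Gamma0_def by (rule CollectI, rule exI[of _ 1], rule exI[of _ 0], rule exI[of _ 0], rule exI[of _ 1]) simp

lemma Gamma0_mmul: "A \<in> Gamma0 N \<Longrightarrow> B \<in> Gamma0 N \<Longrightarrow> mmul A B \<in> Gamma0 N"
  unfolding Gamma0_def
proof (clarify)
  fix a b c d a' b' c' d' :: int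
  assume h: "a*d - b*c = 1" "int N dvd c" "a'*d' - b'*c' = 1" "int N dvd c'"
  show "\<exists>a'' b'' c'' d''. mmul (of_int a, of_int b, of_int c, of_int d) (of_int a', of_int b', of_int c', of_int d')
     = (of_int a'', of_int b'', of_int c'', of_int d'') \<and> a''*d'' - b''*c'' = 1 \<and> int N dvd c''"
    apply (rule exI[of _ "a*a' + b*c'"], rule exI[of _ "a*b' + b*d'"], rule exI[of _ "c*a' + d*c'"], rule exI[of _ "c*b' + d*d'"])
    apply (intro conjI)
      apply simp
    subgoal
    proof -
      have "(a*a' + b*c')*(c*b' + d*d') - (a*b' + b*d')*(c*a' + d*c') = (a*d - b*c)*(a'*d'-b'*c')"
        by (simp add: algebra_simps)
      then show ?thesis using h by simp
    qed
    using h by simp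
qed

lemma Gamma0_minv: "A \<in> Gamma0 N \<Longrightarrow> minv A \<in> Gamma0 N"
  unfolding Gamma0_def
proof (clarify)
  fix a b c d :: int
  assume h: "a*d - b*c = 1" "int N dvd c"
  show "\<exists>a'' b'' c'' d''. minv (of_int a, of_int b, of_int c, of_int d)
     = (of_int a'', of_int b'', of_int c'', of_int d'') \<and> a''*d'' - b''*c'' = 1 \<and> int N dvd c''"
    apply (rule exI[of _ "d"], rule exI[of _ "-b"], rule exI[of _ "-c"], rule exI[of _ "a"])
    using h by (simp add: algebra_simps)
qed

lemma minv_mmul: "mdet A = 1 \<Longrightarrow> mmul (minv A) A = (1,0,0,1)"
  by (cases A) (simp add: algebra_simps)
lemma mmul_minv: "mdet A = 1 \<Longrightarrow> mmul A (minv A) = (1,0,0,1)"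
  by (cases A) (simp add: algebra_simps)
lemma mmul_I1: "mmul (1,0,0,1) A = A" by (cases A) simp
lemma mmul_I2: "mmul A (1,0,0,1) = A" by (cases A) simp

lemma equiv_refl: "cusp_equiv N z z"
  unfolding cusp_equiv_def using Gamma0_I mob_id by blast

lemma equiv_sym: "cusp_equiv N z w \<Longrightarrow> cusp_equiv N w z"
  unfolding cusp_equiv_def
proof clarify
  fix \<gamma> assume g: "\<gamma> \<in> Gamma0 N"
  have "mob (minv \<gamma>) (mob \<gamma> z) = mob (mmul (minv \<gamma>) \<gamma>) z"
    using Gamma0_det[OF g] by (simp add: mob_mmul)
  also have "\<dots> = z" using Gamma0_det[OF g] by (simp add: minv_mmul mob_id)
  finally show "\<exists>\<gamma>'\<in>Gamma0 N. mob \<gamma>' (mob \<gamma> z) = z" using Gamma0_minv[OF g] by blast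
qed

lemma equiv_trans: "cusp_equiv N z w \<Longrightarrow> cusp_equiv N w v \<Longrightarrow> cusp_equiv N z v"
  unfolding cusp_equiv_def
proof clarify
  fix \<gamma> \<delta> assume g: "\<gamma> \<in> Gamma0 N" and d: "\<delta> \<in> Gamma0 N"
  have "mob (mmul \<delta> \<gamma>) z = mob \<delta> (mob \<gamma> z)"
    using Gamma0_det[OF g] by (simp add: mob_mmul)
  then show "\<exists>\<gamma>'\<in>Gamma0 N. mob \<gamma>' z = mob \<delta> (mob \<gamma> z)" using Gamma0_mmul[OF d g] by blast
qed

lemma orbit_eq: "cusp_equiv N z w \<Longrightarrow> {v. cusp_equiv N z v} = {v. cusp_equiv N w v}"
  using equiv_sym equiv_trans by blast

lemma stab_alg:
  fixes p q r s a b c d e :: int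
  assumes h1: "p*a + q*c = e*a" and h2: "r*a + s*c = e*c" and h3: "a*d - b*c = 1" and h4: "p*s - q*r = 1"
    and h5: "e*e = 1"
  defines "n \<equiv> d*(p*b+q*d) - b*(r*b+s*d)"
  shows "p = e - n*a*c \<and> q = n*a^2 \<and> r = -(n*c^2) \<and> s = e + n*a*c"
proof -
  define \<beta> where "\<beta> = a*(r*b+s*d) - c*(p*b+q*d)"
  have "(p*a+q*c)*(r*b+s*d) - (r*a+s*c)*(p*b+q*d) = (p*s - q*r)*(a*d - b*c)"
    by (simp add: algebra_simps)
  then have "(e*a)*(r*b+s*d) - (e*c)*(p*b+q*d) = 1" unfolding h1 h2 h3 h4 by simp
  then have "e*\<beta> = 1" unfolding \<beta>_def by (simp add: algebra_simps)
  then have b: "\<beta> = e" using h5 by (metis mult.left_neutral mult.assoc mult.commute)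
  have u1: "p*b+q*d = n*a + e*b"
  proof -
    have "n*a + \<beta>*b = (p*b+q*d)*(a*d-b*c)" unfolding n_def \<beta>_def by (simp add: algebra_simps)
    then show ?thesis using b h3 by simp
  qed
  have u2: "r*b+s*d = n*c + e*d"
  proof -
    have "n*c + \<beta>*d = (r*b+s*d)*(a*d-b*c)" unfolding n_def \<beta>_def by (simp add: algebra_simps)
    then show ?thesis using b h3 by simp
  qed
  have P: "p = e - n*a*c"
  proof -
    have "p = p*(a*d-b*c)" using h3 by simp
    also have "\<dots> = d*(p*a+q*c) - c*(p*b+q*d)" by (simp add: algebra_simps)
    also have "\<dots> = d*(e*a) - c*(n*a + e*b)" using h1 u1 by simp
    also have "\<dots> = e*(a*d-b*c) - n*a*c" by (simp add: algebra_simps)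
    finally show ?thesis using h3 by simp
  qed
  have Q: "q = n*a^2"
  proof -
    have "q = q*(a*d-b*c)" using h3 by simp
    also have "\<dots> = a*(p*b+q*d) - b*(p*a+q*c)" by (simp add: algebra_simps)
    also have "\<dots> = a*(n*a + e*b) - b*(e*a)" using h1 u1 by simp
    also have "\<dots> = n*a^2" by (simp add: algebra_simps power2_eq_square)
    finally show ?thesis .
  qed
  have R: "r = -(n*c^2)"
  proof -
    have "r = r*(a*d-b*c)" using h3 by simp
    also have "\<dots> = d*(r*a+s*c) - c*(r*b+s*d)" by (simp add: algebra_simps)
    also have "\<dots> = d*(e*c) - c*(n*c + e*d)" using h2 u2 by simp
    also have "\<dots> = -(n*c^2)" by (simp add: algebra_simps power2_eq_square)
    finally show ?thesis .
  qed
  have S: "s = e + n*a*c"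
  proof -
    have "s = s*(a*d-b*c)" using h3 by simp
    also have "\<dots> = a*(r*b+s*d) - b*(r*a+s*c)" by (simp add: algebra_simps)
    also have "\<dots> = a*(n*c + e*d) - b*(e*c)" using h2 u2 by simp
    also have "\<dots> = e*(a*d-b*c) + n*a*c" by (simp add: algebra_simps)
    finally show ?thesis using h3 by simp
  qed
  show ?thesis using P Q R S by simp
qed

lemma conj_S:
  fixes a c e n l s2 s4 :: real
  shows "mmul (minv (l*a, s2, l*c, s4)) (mmul (e - n*a*c, n*a^2, -(n*c^2), e + n*a*c) (l*a, s2, l*c, s4))
     = (e*(l*a*s4 - s2*(l*c)), n*(a*s4 - c*s2)^2, 0, e*(l*a*s4 - s2*(l*c)))"
  by (simp add: algebra_simps power2_eq_square)
lemma tau_formula: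
  fixes s1 s2 s3 s4 :: real
  assumes "s1*s4 - s2*s3 = 1"
  shows "tau (s1,s2,s3,s4) = (1 - s1*s3, s1^2, -(s3^2), 1 + s1*s3)"
proof -
  have "tau (s1,s2,s3,s4) = (s1*s4 - s1*s3 - s2*s3, s1^2, -(s3^2), s1*s4 - s2*s3 + s1*s3)"
    by (simp add: tau_def Tmat_def algebra_simps power2_eq_square)
  then show ?thesis using assms by (simp add: algebra_simps)
qed

definition im :: "int \<Rightarrow> int \<Rightarrow> int \<Rightarrow> int \<Rightarrow> mat2" where
  "im p q r s = (of_int p, of_int q, of_int r, of_int s)"
definition ci :: "int \<Rightarrow> int \<Rightarrow> real option" where
  "ci a c = cp (of_int a) (of_int c)"

lemma Gamma0_im: "p*s - q*r = 1 \<Longrightarrow> int N dvd r \<Longrightarrow> im p q r s \<in> Gamma0 N"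
  unfolding Gamma0_def im_def by blast

lemma Gamma0_E:
  assumes "\<gamma> \<in> Gamma0 N"
  obtains p q r s where "\<gamma> = im p q r s" "p*s - q*r = 1" "int N dvd r"
  using assms unfolding Gamma0_def im_def by (auto simp: algebra_simps)

lemma coprime_nz: "coprime (a::int) c \<Longrightarrow> a \<noteq> 0 \<or> c \<noteq> 0"
  by auto

lemma mob_im: "a \<noteq> 0 \<or> c \<noteq> 0 \<Longrightarrow> mob (im p q r s) (ci a c) = ci (p*a+q*c) (r*a+s*c)"
  unfolding im_def ci_def by (subst mob_cp) auto

lemma ci_scale: "e \<noteq> 0 \<Longrightarrow> ci (e*a) (e*c) = ci a c"
  unfolding ci_def using cp_scale[of "of_int e"] by simp

lemma coprime_image:
  fixes p q r s a c :: int
  assumes "p*s - q*r = 1" "coprime a c"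
  shows "coprime (p*a+q*c) (r*a+s*c)"
proof (rule coprimeI)
  fix k assume k1: "k dvd p*a+q*c" and k2: "k dvd r*a+s*c"
  have "k dvd s*(p*a+q*c) - q*(r*a+s*c)" using k1 k2 by simp
  moreover have "s*(p*a+q*c) - q*(r*a+s*c) = (p*s-q*r)*a" by (simp add: algebra_simps)
  ultimately have ka: "k dvd a" using assms(1) by simp
  have "k dvd p*(r*a+s*c) - r*(p*a+q*c)" using k1 k2 by simp
  moreover have "p*(r*a+s*c) - r*(p*a+q*c) = (p*s-q*r)*c" by (simp add: algebra_simps)
  ultimately have kc: "k dvd c" using assms(1) by simp
  show "is_unit k" using coprime_common_divisor[OF assms(2) ka kc] .
qed

lemma coprime_det:
  fixes a b c d :: int
  assumes "a*d - b*c = 1" shows "coprime a c"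
proof (rule coprimeI)
  fix k assume "k dvd a" "k dvd c"
  then have "k dvd a*d - b*c" by simp
  then show "is_unit k" using assms by simp
qed

lemma det_of_coprime:
  fixes a c :: int
  assumes "coprime a c" obtains b d where "a*d - b*c = 1"
proof -
  obtain u v where "u*a + v*c = gcd a c" using bezout_int by blast
  then have "a*u - (-v)*c = 1" using assms by (simp add: algebra_simps)
  then show ?thesis using that by blast
qed

lemma unit_int: "is_unit (a::int) \<Longrightarrow> a = 1 \<or> a = -1"
  by auto

lemma ci_eq:
  fixes a c a' c' :: int
  assumes cop: "coprime a c" "coprime a' c'" and eq: "ci a c = ci a' c'"
  shows "(a' = a \<and> c' = c) \<or> (a' = -a \<and> c' = -c)"
proof (cases "c = 0")
  case True
  then have c': "c' = 0" using eq by (auto simp: ci_def cp_def split: if_splits)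
  have "a = 1 \<or> a = -1" using cop(1) True by (intro unit_int) simp
  moreover have "a' = 1 \<or> a' = -1" using cop(2) c' by (intro unit_int) simp
  ultimately show ?thesis using True c' by auto
next
  case False
  then have c': "c' \<noteq> 0" using eq by (auto simp: ci_def cp_def split: if_splits)
  have "of_int a / of_int c = (of_int a' / of_int c' :: real)" using eq False c' by (simp add: ci_def cp_def)
  then have "of_int (a * c') = (of_int (a' * c) :: real)" using False c' by (simp add: field_simps)
  then have ac: "a * c' = a' * c" by linarith
  have "c dvd a * c'" using ac by simp
  then have d1: "c dvd c'" using cop(1) by (simp add: coprime_commute coprime_dvd_mult_right_iff)
  have "c' dvd a' * c" using ac by (metis dvd_triv_right)
  then have d2: "c' dvd c" using cop(2) by (simp add: coprime_commute coprime_dvd_mult_right_iff)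
  have "\<bar>c\<bar> = \<bar>c'\<bar>" using zdvd_antisym_abs d1 d2 by blast
  then have "c' = c \<or> c' = -c" by auto
  then show ?thesis
  proof
    assume "c' = c" then show ?thesis using ac False by auto
  next
    assume h: "c' = -c" then have "a * (-c) = a' * c" using ac by simp
    then have "(-a) * c = a' * c" by simp
    then have "a' = -a" using False by (metis mult_right_cancel)
    then show ?thesis using h by simp
  qed
qed

definition hh :: "nat \<Rightarrow> int \<Rightarrow> int" where
  "hh N c = int N div gcd (c^2) (int N)"

lemma hh_props:
  assumes "N \<ge> 1"
  shows "hh N c > 0" "int N = gcd (c^2) (int N) * hh N c"
proof -
  define e where "e = gcd (c^2) (int N)"
  have e0: "e > 0" using assms by (simp add: e_def)
  have "e dvd int N" by (simp add: e_def)
  then obtain k where k: "int N = e * k" by blast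
  have "hh N c = int N div e" by (simp add: hh_def e_def)
  then have "hh N c = k" using e0 k by simp
  then show "int N = gcd (c^2) (int N) * hh N c" using k e_def by simp
  have "k > 0" using k e0 assms by (metis of_nat_0_less_iff linorder_not_le le_less_trans less_one
      mult_pos_neg order_less_irrefl zero_less_mult_pos nat_neq_iff of_nat_le_0_iff)
  then show "hh N c > 0" using \<open>hh N c = k\<close> by simp
qed

lemma hdiv:
  assumes "N \<ge> 1"
  shows "int N dvd n * c^2 \<longleftrightarrow> hh N c dvd n"
proof -
  define e where "e = gcd (c^2) (int N)"
  have e0: "e > 0" using assms by (simp add: e_def)
  have N: "int N = e * hh N c" using hh_props(2)[OF assms] e_def by simp
  obtain k where k: "c^2 = e * k" unfolding e_def by (meson gcd_dvd1 dvd_def)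
  have cop: "coprime (c^2 div e) (int N div e)" unfolding e_def
    by (rule div_gcd_coprime) (use assms in auto)
  have "c^2 div e = k" "int N div e = hh N c" using k N e0 by auto
  then have cop2: "coprime (hh N c) k" using cop by (simp add: coprime_commute)
  have "int N dvd n * c^2 \<longleftrightarrow> e * hh N c dvd e * (n * k)" using N k by (simp add: algebra_simps)
  also have "\<dots> \<longleftrightarrow> hh N c dvd n * k" using e0 by simp
  also have "\<dots> \<longleftrightarrow> hh N c dvd n" using cop2 by (simp add: coprime_dvd_mult_left_iff)
  finally show ?thesis .
qed

definition Sm :: "int \<Rightarrow> int \<Rightarrow> int \<Rightarrow> int \<Rightarrow> mat2" where
  "Sm a c e n = im (e - n*a*c) (n*a^2) (-(n*c^2)) (e + n*a*c)"

lemma stab_char: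
  assumes N1: "N \<ge> 1" and ad: "a*d - b*c = 1"
  shows "stabilizer N (ci a c) = {Sm a c e n | e n. (e = 1 \<or> e = -1) \<and> hh N c dvd n}"
proof (intro equalityI subsetI)
  have cop: "coprime a c" using coprime_det[OF ad] .
  have nz: "a \<noteq> 0 \<or> c \<noteq> 0" using coprime_nz[OF cop] .
  fix \<gamma> assume "\<gamma> \<in> stabilizer N (ci a c)"
  then have g: "\<gamma> \<in> Gamma0 N" and fx: "mob \<gamma> (ci a c) = ci a c" by (auto simp: stabilizer_def)
  obtain p q r s where gp: "\<gamma> = im p q r s" "p*s - q*r = 1" "int N dvd r" using Gamma0_E[OF g] by blast
  have "ci (p*a+q*c) (r*a+s*c) = ci a c" using fx gp(1) mob_im[OF nz] by simp
  then have "(a = p*a+q*c \<and> c = r*a+s*c) \<or> (a = -(p*a+q*c) \<and> c = -(r*a+s*c))"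
    using ci_eq[OF coprime_image[OF gp(2) cop] cop] by blast
  then obtain e :: int where e: "e = 1 \<or> e = -1" "p*a+q*c = e*a" "r*a+s*c = e*c" by (metis mult_1 mult_minus1 minus_minus)
  have ee: "e*e = 1" using e(1) by auto
  define n where "n = d*(p*b+q*d) - b*(r*b+s*d)"
  have form: "p = e - n*a*c \<and> q = n*a^2 \<and> r = -(n*c^2) \<and> s = e + n*a*c"
    using stab_alg[OF e(2) e(3) ad gp(2) ee] unfolding n_def by blast
  have "hh N c dvd n" using gp(3) form hdiv[OF N1] by simp
  then show "\<gamma> \<in> {Sm a c e n | e n. (e = 1 \<or> e = -1) \<and> hh N c dvd n}"
    using e(1) gp(1) form unfolding Sm_def by blast
next
  have cop: "coprime a c" using coprime_det[OF ad] .
  have nz: "a \<noteq> 0 \<or> c \<noteq> 0" using coprime_nz[OF cop] .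
  fix \<gamma> assume "\<gamma> \<in> {Sm a c e n | e n. (e = 1 \<or> e = -1) \<and> hh N c dvd n}"
  then obtain e n where en: "\<gamma> = Sm a c e n" "e = 1 \<or> e = -1" "hh N c dvd n" by blast
  have ee: "e*e = 1" using en(2) by auto
  have det: "(e - n*a*c)*(e + n*a*c) - (n*a^2)*(-(n*c^2)) = 1"
    using ee by (simp add: algebra_simps power2_eq_square)
  have dv: "int N dvd -(n*c^2)" using hdiv[OF N1] en(3) by simp
  have "\<gamma> \<in> Gamma0 N" using Gamma0_im[OF det dv] en(1) Sm_def by simp
  moreover have "mob \<gamma> (ci a c) = ci a c"
  proof -
    have "mob \<gamma> (ci a c) = ci ((e - n*a*c)*a + (n*a^2)*c) ((-(n*c^2))*a + (e + n*a*c)*c)"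
      using en(1) mob_im[OF nz] Sm_def by simp
    also have "\<dots> = ci (e*a) (e*c)" by (simp add: algebra_simps power2_eq_square)
    also have "\<dots> = ci a c" using en(2) ci_scale[of e a c] by auto
    finally show ?thesis .
  qed
  ultimately show "\<gamma> \<in> stabilizer N (ci a c)" by (simp add: stabilizer_def)
qed

lemma Sm_real: "Sm a c e n = (of_int e - of_int n * of_int a * of_int c, of_int n * (of_int a)^2,
   -(of_int n * (of_int c)^2), of_int e + of_int n * of_int a * of_int c)"
  by (simp add: Sm_def im_def)

lemma conj_gen:
  fixes l s2 s4 :: real and a c e n :: int
  assumes det: "mdet (l*of_int a, s2, l*of_int c, s4) = 1" and l: "l \<noteq> 0"
  shows "mmul (minv (l*of_int a, s2, l*of_int c, s4)) (mmul (Sm a c e n) (l*of_int a, s2, l*of_int c, s4))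
       = (of_int e, of_int n / l^2, 0, of_int e)"
proof -
  have d: "l*of_int a*s4 - s2*(l*of_int c) = 1" using det by simp
  have k: "(of_int a*s4 - of_int c*s2) = 1 / l" using d l by (simp add: field_simps)
  show ?thesis unfolding Sm_real conj_S using d k by (simp add: power_divide)
qed

definition sg :: "nat \<Rightarrow> int \<Rightarrow> int \<Rightarrow> int \<Rightarrow> int \<Rightarrow> mat2" where
  "sg N a b c d = (sqrt (of_int (hh N c)) * of_int a, of_int b / sqrt (of_int (hh N c)),
                   sqrt (of_int (hh N c)) * of_int c, of_int d / sqrt (of_int (hh N c)))"

lemma sg_scaling:
  assumes N1: "N \<ge> 1" and ad: "a*d - b*c = 1"
  shows "scaling_matrix N (ci a c) (sg N a b c d)"
proof -
  define h where "h = hh N c"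
  have h0: "h > 0" using hh_props(1)[OF N1] h_def by simp
  define l where "l = sqrt (of_int h)"
  have l0: "l > 0" using h0 l_def by simp
  have l2: "l^2 = of_int h" using h0 l_def by simp
  have sgl: "sg N a b c d = (l * of_int a, of_int b / l, l * of_int c, of_int d / l)"
    unfolding sg_def l_def h_def by simp
  have det: "mdet (l * of_int a, of_int b / l, l * of_int c, of_int d / l) = 1"
  proof -
    have "mdet (l * of_int a, of_int b / l, l * of_int c, of_int d / l) = of_int (a*d - b*c)"
      using l0 by (simp add: field_simps)
    then show ?thesis using ad by simp
  qed
  have mobN: "mob (sg N a b c d) None = ci a c"
    unfolding sgl using l0 by (simp add: ci_def cp_def)
  have conj: "\<And>e n. mmul (minv (sg N a b c d)) (mmul (Sm a c e n) (sg N a b c d))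
       = (of_int e, of_int n / of_int h, 0, of_int e)"
    unfolding sgl using conj_gen[OF det] l0 l2 by simp
  have img: "(\<lambda>\<gamma>. mmul (minv (sg N a b c d)) (mmul \<gamma> (sg N a b c d))) ` stabilizer N (ci a c) =
       {(1, of_int n, 0, 1) | n. True} \<union> {(-1, - of_int n, 0, -1) | n. True}"
    (is "?f ` _ = ?R")
  proof (intro equalityI subsetI)
    fix x assume "x \<in> ?f ` stabilizer N (ci a c)"
    then obtain e n where en: "x = ?f (Sm a c e n)" "e = 1 \<or> e = -1" "hh N c dvd n"
      unfolding stab_char[OF N1 ad] by blast
    obtain m where m: "n = h * m" using en(3) h_def by blast
    have x: "x = (of_int e, of_int m, 0, of_int e)" using en(1) conj m h0 by simp
    show "x \<in> ?R"
    proof (cases "e = 1")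
      case True then show ?thesis using x by auto
    next
      case False then have "e = -1" using en(2) by simp
      then have "x = (-1, - of_int (-m), 0, -1)" using x by simp
      then show ?thesis by blast
    qed
  next
    fix x assume "x \<in> ?R"
    then obtain m :: int where "x = (1, of_int m, 0, 1) \<or> x = (-1, - of_int m, 0, -1)" by blast
    then show "x \<in> ?f ` stabilizer N (ci a c)"
    proof
      assume x: "x = (1, of_int m, 0, 1)"
      have "Sm a c 1 (h*m) \<in> stabilizer N (ci a c)" unfolding stab_char[OF N1 ad] h_def
        by (intro CollectI exI[of _ 1] exI[of _ "hh N c * m"]) simp
      moreover have "?f (Sm a c 1 (h*m)) = x" using conj x h0 by simp
      ultimately show ?thesis by blast
    next
      assume x: "x = (-1, - of_int m, 0, -1)"
      have "Sm a c (-1) (-(h*m)) \<in> stabilizer N (ci a c)" unfolding stab_char[OF N1 ad] h_def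
        by (intro CollectI exI[of _ "-1"] exI[of _ "-(hh N c * m)"]) simp
      moreover have "?f (Sm a c (-1) (-(h*m))) = x" using conj[of "-1" "-(h*m)"] x h0 by simp
      ultimately show ?thesis by blast
    qed
  qed
  have "sg N a b c d \<in> SL2R" unfolding SL2R_def sgl using det by simp
  then show ?thesis unfolding scaling_matrix_def using mobN img by simp
qed

lemma tau_scaling:
  assumes N1: "N \<ge> 1" and ad: "a*d - b*c = 1" and sc: "scaling_matrix N (ci a c) \<sigma>"
  shows "tau \<sigma> = Sm a c 1 (hh N c)"
proof -
  have cop: "coprime a c" using coprime_det[OF ad] .
  have nz: "a \<noteq> 0 \<or> c \<noteq> 0" using coprime_nz[OF cop] .
  define h where "h = hh N c"
  have h0: "h > 0" using hh_props(1)[OF N1] h_def by simp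
  obtain s1 s2 s3 s4 where \<sigma>: "\<sigma> = (s1,s2,s3,s4)" by (cases \<sigma>) auto
  have det: "s1*s4 - s2*s3 = 1" using sc \<sigma> by (simp add: scaling_matrix_def SL2R_def)
  have mobs: "mob (s1,s2,s3,s4) None = ci a c" using sc \<sigma> by (simp add: scaling_matrix_def)
  obtain l where l: "l \<noteq> 0" "s1 = l * of_int a" "s3 = l * of_int c"
  proof (cases "c = 0")
    case True
    then have s3: "s3 = 0" using mobs by (auto simp: ci_def cp_def split: if_splits)
    have "a = 1 \<or> a = -1" using cop True by (intro unit_int) simp
    then have aa: "of_int a * of_int a = (1::real)" by auto
    have "s1 \<noteq> 0" using det s3 by auto
    have a0: "a \<noteq> 0" using \<open>a = 1 \<or> a = -1\<close> by auto
    have "s1 = (s1 * of_int a) * of_int a" using aa by (simp add: mult.assoc)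
    then show ?thesis using \<open>s1 \<noteq> 0\<close> a0 s3 True by (intro that[of "s1 * of_int a"]) auto
  next
    case False
    then have "s3 \<noteq> 0" "s1 / s3 = of_int a / of_int c" using mobs by (auto simp: ci_def cp_def split: if_splits)
    then show ?thesis using that[of "s3 / of_int c"] False by (auto simp: field_simps)
  qed
  have tauf: "tau \<sigma> = (1 - l^2 * of_int a * of_int c, l^2 * (of_int a)^2, -(l^2 * (of_int c)^2), 1 + l^2 * of_int a * of_int c)"
  proof -
    have "tau \<sigma> = (1 - s1*s3, s1^2, -(s3^2), 1 + s1*s3)" using tau_formula[OF det] \<sigma> by simp
    then show ?thesis unfolding l by (simp add: algebra_simps power2_eq_square)
  qed
  have sc2: "scaling_matrix N (ci a c) (l * of_int a, s2, l * of_int c, s4)" using sc \<sigma> l by simp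
  have mdet1: "mdet (l * of_int a, s2, l * of_int c, s4) = 1" using det l by simp
  have img: "(\<lambda>\<gamma>. mmul (minv \<sigma>) (mmul \<gamma> \<sigma>)) ` stabilizer N (ci a c) =
       {(1, of_int n, 0, 1) | n. True} \<union> {(-1, - of_int n, 0, -1) | n. True}"
    using sc by (simp add: scaling_matrix_def)
  have "Tmat \<in> {(1, of_int n, 0, 1) | n. True} \<union> {(-1, - of_int n, 0, -1) | n. True}"
    unfolding Tmat_def by (intro UnI1 CollectI exI[of _ 1]) simp
  then obtain \<gamma> where g: "\<gamma> \<in> stabilizer N (ci a c)" "mmul (minv \<sigma>) (mmul \<gamma> \<sigma>) = Tmat"
    using img by (metis (no_types, lifting) imageE)
  have dets: "mdet \<sigma> = 1" using det \<sigma> by simp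
  have "tau \<sigma> = mmul \<sigma> (mmul (mmul (minv \<sigma>) (mmul \<gamma> \<sigma>)) (minv \<sigma>))" unfolding tau_def g(2) ..
  also have "\<dots> = mmul (mmul \<sigma> (minv \<sigma>)) (mmul \<gamma> (mmul \<sigma> (minv \<sigma>)))"
    by (simp add: mmul_assoc)
  also have "\<dots> = \<gamma>" using dets by (simp add: mmul_minv mmul_I1 mmul_I2)
  finally have tg: "tau \<sigma> = \<gamma>" .
  obtain e n where en: "\<gamma> = Sm a c e n" "e = 1 \<or> e = -1" "h dvd n"
    using g(1) unfolding stab_char[OF N1 ad] h_def by blast
  have eqs: "l^2 * (of_int a)^2 = of_int n * (of_int a)^2" "l^2 * (of_int c)^2 = of_int n * (of_int c)^2"
     "1 - l^2 * of_int a * of_int c = of_int e - of_int n * of_int a * of_int c"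
    using tg tauf en(1) unfolding Sm_real by auto
  have ln: "l^2 = of_int n" using nz eqs(1,2) by auto
  then have "e = 1" using eqs(3) by simp
  have "Sm a c 1 h \<in> stabilizer N (ci a c)" unfolding stab_char[OF N1 ad] h_def
    by (intro CollectI exI[of _ 1] exI[of _ "hh N c"]) simp
  then have "mmul (minv \<sigma>) (mmul (Sm a c 1 h) \<sigma>) \<in> {(1, of_int n, 0, 1) | n. True} \<union> {(-1, - of_int n, 0, -1) | n. True}"
    using img by blast
  moreover have "mmul (minv \<sigma>) (mmul (Sm a c 1 h) \<sigma>) = (1, of_int h / l^2, 0, 1)"
    using conj_gen[OF mdet1 l(1), of 1 h] \<sigma> l by simp
  ultimately obtain m :: int where m: "of_int h / l^2 = of_int m" by auto
  have lpos: "l^2 > 0" using l(1) by simp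
  then have "of_int h = of_int m * (of_int n :: real)" using m ln by (simp add: field_simps)
  then have hmn: "h = m * n" by (metis of_int_eq_iff of_int_mult)
  have n0: "n > 0" using lpos ln by simp
  obtain k where k: "n = h * k" using en(3) by blast
  have "h * 1 = h * (m * k)" using hmn k by (simp add: algebra_simps)
  then have "m * k = 1" using h0 by (metis mult_left_cancel less_irrefl)
  then have "k = 1 \<or> k = -1" using zmult_eq_1_iff by blast
  then have "n = h" using k n0 h0 by auto
  then show ?thesis using tg en(1) \<open>e = 1\<close> h_def by simp
qed

lemma singular_iff:
  assumes N1: "N \<ge> 1" and cop: "coprime a c"
  shows "singular_cusp N \<psi> (ci a c) \<longleftrightarrow> \<psi> (1 + hh N c * a * c) = 1"
proof -
  obtain b d where ad: "a*d - b*c = 1" using det_of_coprime[OF cop] by blast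
  have ps: "psi_mat \<psi> (Sm a c 1 (hh N c)) = \<psi> (1 + hh N c * a * c)"
  proof -
    have "\<lfloor>real_of_int (hh N c) * real_of_int a * real_of_int c\<rfloor> = hh N c * a * c"
      by (metis floor_of_int of_int_mult)
    then show ?thesis unfolding psi_mat_def Sm_def im_def by simp
  qed
  show ?thesis
  proof
    assume "singular_cusp N \<psi> (ci a c)"
    then obtain \<sigma> where "scaling_matrix N (ci a c) \<sigma>" "psi_mat \<psi> (tau \<sigma>) = 1"
      unfolding singular_cusp_def by blast
    then show "\<psi> (1 + hh N c * a * c) = 1" using tau_scaling[OF N1 ad] ps by simp
  next
    assume "\<psi> (1 + hh N c * a * c) = 1"
    then have "scaling_matrix N (ci a c) (sg N a b c d) \<and> psi_mat \<psi> (tau (sg N a b c d)) = 1"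
      using sg_scaling[OF N1 ad] tau_scaling[OF N1 ad sg_scaling[OF N1 ad]] ps by auto
    then show "singular_cusp N \<psi> (ci a c)" unfolding singular_cusp_def by blast
  qed
qed

lemma coprime_by_primes:
  fixes y F :: int
  assumes F: "F \<noteq> 0" and h: "\<And>p. prime p \<Longrightarrow> p dvd F \<Longrightarrow> p dvd y \<Longrightarrow> False"
  shows "coprime y F"
proof (rule coprimeI)
  fix k assume k1: "k dvd y" and k2: "k dvd F"
  show "is_unit k"
  proof (rule ccontr)
    assume nu: "\<not> is_unit k"
    have "k \<noteq> 0" using k2 F by auto
    then obtain p where "p dvd k" "prime p" using prime_divisor_exists[OF _ nu] by blast
    then show False using h k1 k2 by (meson dvd_trans)
  qed
qed

lemma lift_coprime:
  fixes x M F :: int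
  assumes F: "F \<noteq> 0" and cop: "coprime x (gcd M F)"
  obtains y where "[y = x] (mod M)" "coprime y F"
proof -
  define P where "P = {p \<in> prime_factors F. \<not> p dvd x}"
  define t where "t = prod id P"
  have fin: "finite P" unfolding P_def by simp
  define y where "y = x + M * t"
  have "coprime y F"
  proof (rule coprime_by_primes[OF F])
    fix p assume p: "prime p" "p dvd F" "p dvd y"
    show False
    proof (cases "p dvd x")
      case True
      have nM: "\<not> p dvd M"
      proof
        assume "p dvd M"
        then have "p dvd gcd M F" using p(2) by simp
        then have "is_unit p" using coprime_common_divisor[OF cop True] by simp
        then show False using p(1) not_prime_unit by blast
      qed
      have nt: "\<not> p dvd t"
      proof
        assume "p dvd t"
        then obtain q where q: "q \<in> P" "p dvd q" using prime_dvd_prod_iff[OF fin p(1)] unfolding t_def by auto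
        have "prime q" "\<not> q dvd x" using q(1) unfolding P_def by (auto simp: in_prime_factors_iff)
        then have "p = q" using primes_dvd_imp_eq[OF p(1) _ q(2)] by simp
        then show False using True \<open>\<not> q dvd x\<close> by simp
      qed
      have "\<not> p dvd M * t" using nM nt prime_dvd_mult_iff[OF p(1)] by simp
      moreover have "p dvd M * t" using p(3) True unfolding y_def by (metis dvd_add_right_iff)
      ultimately show False by simp
    next
      case False
      then have "p \<in> P" unfolding P_def using p F by (simp add: in_prime_factors_iff)
      then have "p dvd t" unfolding t_def using fin by (metis dvd_prod_eqI id_apply)
      then have "p dvd M * t" by simp
      then have "p dvd x" using p(3) unfolding y_def by (metis dvd_add_left_iff)
      then show False using False by simp
    qed
  qed
  moreover have "[y = x] (mod M)" unfolding y_def cong_iff_dvd_diff by simp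
  ultimately show ?thesis using that by blast
qed

definition fN :: "nat \<Rightarrow> int \<Rightarrow> int" where "fN N c = gcd c (int N)"
definition gN :: "nat \<Rightarrow> int \<Rightarrow> int" where "gN N c = gcd (fN N c) (int N div fN N c)"
definition uN :: "nat \<Rightarrow> int \<Rightarrow> int \<Rightarrow> int" where
  "uN N a c = (a * (c div fN N c) - 1) mod gN N c + 1"

lemma struct:
  assumes N1: "N \<ge> 1" and cop: "coprime a c"
  shows "fN N c > 0" "c = fN N c * (c div fN N c)" "int N = fN N c * (int N div fN N c)"
    "coprime (c div fN N c) (int N div fN N c)"
    "gN N c > 0" "gN N c dvd fN N c" "gN N c dvd int N div fN N c"
    "coprime (a * (c div fN N c)) (gN N c)"
    "hh N c * a * c = (int N div gN N c) * (a * (c div fN N c))"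
    "gN N c * gN N c dvd int N"
proof -
  define f where "f = fN N c"
  define g where "g = gN N c"
  define c1 where "c1 = c div f"
  define N1 where "N1 = int N div f"
  have f0: "f > 0" using N1 by (simp add: f_def fN_def)
  then show "fN N c > 0" by (simp add: f_def)
  have fc: "f dvd c" "f dvd int N" by (auto simp: f_def fN_def)
  have c: "c = f * c1" using fc by (simp add: c1_def)
  then show "c = fN N c * (c div fN N c)" by (simp add: c1_def f_def)
  have NN: "int N = f * N1" using fc by (simp add: N1_def)
  then show "int N = fN N c * (int N div fN N c)" by (simp add: N1_def f_def)
  have cop1: "coprime c1 N1" unfolding c1_def N1_def f_def fN_def
    by (rule div_gcd_coprime) (use N1 in auto)
  then show "coprime (c div fN N c) (int N div fN N c)" by (simp add: c1_def N1_def f_def)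
  have g: "g = gcd f N1" by (simp add: g_def gN_def f_def N1_def)
  have g0: "g > 0" using g f0 by simp
  then show "gN N c > 0" by (simp add: g_def)
  have gf: "g dvd f" "g dvd N1" using g by auto
  then show "gN N c dvd fN N c" "gN N c dvd int N div fN N c" by (simp_all add: g_def f_def N1_def)
  have "coprime a (f * c1)" using cop c by simp
  then have ca: "coprime a c1" and cf: "coprime a f" by simp_all
  have "coprime a g" using coprime_divisors[OF dvd_refl gf(1) cf] .
  moreover have "coprime c1 g" using coprime_divisors[OF dvd_refl gf(2) cop1] .
  ultimately have "coprime (a * c1) g" by simp
  then show "coprime (a * (c div fN N c)) (gN N c)" by (simp add: c1_def g_def f_def)
  have "g * g dvd f * N1" by (rule mult_dvd_mono[OF gf])
  then have gg: "g * g dvd int N" using NN by simp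
  then show "gN N c * gN N c dvd int N" by (simp add: g_def)
  obtain k where k: "N1 = g * k" using gf(2) by blast
  have "gcd (c^2) (int N) = gcd (f * (f * c1^2)) (f * N1)" using c NN by (simp add: power2_eq_square algebra_simps)
  also have "\<dots> = f * gcd (f * c1^2) N1" using gcd_mult_distrib_int[of f "f*c1^2" N1] f0 by simp
  also have "gcd (f * c1^2) N1 = gcd f N1"
    using gcd_mult_left_right_cancel[of N1 "c1^2" f] cop1 by (simp add: coprime_commute)
  finally have e: "gcd (c^2) (int N) = f * g" using g by simp
  have "hh N c = (f * g * k) div (f * g)" unfolding hh_def e using NN k by (simp add: algebra_simps)
  then have hk: "hh N c = k" using f0 g0 by simp
  have "int N div g = (g * (f * k)) div g" using NN k by (simp add: algebra_simps)
  then have Dk: "int N div g = f * k" using g0 by simp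
  show "hh N c * a * c = (int N div gN N c) * (a * (c div fN N c))"
    unfolding g_def[symmetric] f_def[symmetric] c1_def[symmetric] hk Dk using c by (simp add: algebra_simps)
qed

lemma dc_period:
  assumes dc: "dirichlet_char M \<chi>" shows "\<chi> (n + int M * k) = \<chi> n"
proof -
  have per: "\<And>n. \<chi> (n + int M) = \<chi> n" using dc by (simp add: dirichlet_char_def)
  have nat: "\<And>n. \<chi> (n + int M * int j) = \<chi> n" for j
  proof (induction j)
    case 0 then show ?case by simp
  next
    case (Suc j)
    have "\<chi> (n + int M * int (Suc j)) = \<chi> ((n + int M * int j) + int M)" by (simp add: algebra_simps)
    also have "\<dots> = \<chi> (n + int M * int j)" by (rule per)
    also have "\<dots> = \<chi> n" by (rule Suc)
    finally show ?case .
  qed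
  show ?thesis
  proof (cases "k \<ge> 0")
    case True then have "k = int (nat k)" by simp
    then show ?thesis using nat[of n "nat k"] by (simp only:)
  next
    case False
    have e: "(n + int M * k) + int M * int (nat (-k)) = n" using False by (simp add: algebra_simps)
    have "\<chi> ((n + int M * k) + int M * int (nat (-k))) = \<chi> (n + int M * k)" by (rule nat)
    then show ?thesis unfolding e by simp
  qed
qed

lemma dc_cong:
  assumes dc: "dirichlet_char M \<chi>" and c: "[m = n] (mod int M)" shows "\<chi> m = \<chi> n"
proof -
  obtain k where "n = m + int M * k" using c unfolding cong_iff_lin by blast
  then show ?thesis using dc_period[OF dc] by simp
qed

lemma dc_mult: "dirichlet_char M \<chi> \<Longrightarrow> \<chi> (m * n) = \<chi> m * \<chi> n"
  by (simp add: dirichlet_char_def)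

lemma psi_pow:
  assumes dc: "dirichlet_char N \<psi>" and D: "int N dvd D * D"
  shows "\<psi> (1 + D * int t) = \<psi> (1 + D) ^ t"
proof (induction t)
  case 0 then show ?case using dc by (simp add: dirichlet_char_def)
next
  case (Suc t)
  have "[1 + D * int (Suc t) = (1 + D * int t) * (1 + D)] (mod int N)"
  proof -
    have "(1 + D * int t) * (1 + D) - (1 + D * int (Suc t)) = (D * D) * int t" by (simp add: algebra_simps)
    moreover have "int N dvd (D * D) * int t" using D by (rule dvd_mult2)
    ultimately have "int N dvd (1 + D * int t) * (1 + D) - (1 + D * int (Suc t))" by simp
    then show ?thesis unfolding cong_iff_dvd_diff by (simp add: dvd_diff_commute)
  qed
  then have "\<psi> (1 + D * int (Suc t)) = \<psi> (1 + D * int t) * \<psi> (1 + D)"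
    using dc_cong[OF dc] dc_mult[OF dc] by simp
  then show ?case using Suc by simp
qed

lemma char_crit:
  assumes dc: "dirichlet_char N \<psi>" and ind: "induced_by_primitive N \<psi> Nstar"
    and g0: "g > 0" and gg: "g * g dvd int N" and w: "coprime w g"
  shows "\<psi> (1 + (int N div g) * w) = 1 \<longleftrightarrow> int Nstar dvd int N div g"
proof -
  define D where "D = int N div g"
  have gN: "g dvd int N" using gg dvd_mult_left by blast
  have ND: "int N = g * D" using gN by (simp add: D_def)
  have "g * g dvd g * D" using gg ND by simp
  then have "g dvd D" using g0 by simp
  then obtain j where j: "D = g * j" by blast
  have "D * D = int N * j" using ND j by (simp add: algebra_simps)
  then have NDD: "int N dvd D * D" by simp
  have copN: "coprime (1 + D * t) (int N)" for t
  proof -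
    have "coprime (1 + D * t) D"
    proof (rule coprimeI)
      fix k assume "k dvd 1 + D * t" "k dvd D"
      then have "k dvd (1 + D * t) - D * t" by (metis dvd_diff dvd_mult2)
      then show "is_unit k" by simp
    qed
    then have "coprime (1 + D * t) (D * D)" by simp
    then show ?thesis using coprime_divisors[OF dvd_refl NDD] by blast
  qed
  obtain \<chi> where \<chi>: "primitive_char Nstar \<chi>" "\<And>n. \<psi> n = (if coprime n (int N) then \<chi> n else 0)"
    and NsN: "Nstar dvd N"
    using ind unfolding induced_by_primitive_def by blast
  have dcs: "dirichlet_char Nstar \<chi>" using \<chi>(1) by (simp add: primitive_char_def)
  have Ns0: "Nstar \<ge> 1" using dcs by (simp add: dirichlet_char_def)
  have psi1: "\<psi> (1 + D * t) = \<chi> (1 + D * t)" for t using \<chi>(2) copN by simp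
  show ?thesis unfolding D_def[symmetric]
  proof
    assume "int Nstar dvd D"
    then obtain i where i: "D = int Nstar * i" by blast
    have eq: "1 + D * w = 1 + int Nstar * (i * w)" using i by (simp add: algebra_simps)
    have "\<psi> (1 + D * w) = \<chi> (1 + D * w)" by (rule psi1)
    also have "\<dots> = \<chi> (1 + int Nstar * (i * w))" by (simp only: eq)
    also have "\<dots> = \<chi> 1" using dc_period[OF dcs, of 1] by simp
    also have "\<dots> = 1" using dcs by (simp add: dirichlet_char_def)
    finally show "\<psi> (1 + D * w) = 1" .
  next
    assume h: "\<psi> (1 + D * w) = 1"
    obtain w' where w': "[w * w' = 1] (mod g)" using cong_solve_coprime_int[OF w] by blast
    define w0 where "w0 = w' mod g"
    have w00: "w0 \<ge> 0" using g0 by (simp add: w0_def)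
    have "[w * w0 = w * w'] (mod g)" unfolding w0_def by (simp add: cong_def mod_mult_right_eq)
    then have ww0: "[w * w0 = 1] (mod g)" using w' cong_trans by blast
    have "\<psi> (1 + D) = \<psi> (1 + (D * w) * int (nat w0))"
    proof (rule dc_cong[OF dc])
      obtain k where "w * w0 - 1 = g * k" using ww0 unfolding cong_iff_dvd_diff by (metis dvd_def)
      have "1 + (D * w) * int (nat w0) - (1 + D) = D * (w * w0 - 1)" using w00 by (simp add: algebra_simps)
      also have "\<dots> = int N * k" using ND \<open>w * w0 - 1 = g * k\<close> by simp
      finally have "int N dvd 1 + (D * w) * int (nat w0) - (1 + D)" by simp
      then show "[1 + D = 1 + D * w * int (nat w0)] (mod int N)" unfolding cong_iff_dvd_diff
        by (simp add: dvd_diff_commute)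
    qed
    also have "\<dots> = \<psi> (1 + D * w) ^ nat w0"
    proof (rule psi_pow[OF dc])
      have ew: "(D * w) * (D * w) = (D * D) * (w * w)" by (simp add: algebra_simps)
      show "int N dvd (D * w) * (D * w)" unfolding ew using NDD by (rule dvd_mult2)
    qed
    also have "\<dots> = 1" using h by simp
    finally have p1: "\<psi> (1 + D) = 1" .
    have allt: "\<psi> (1 + D * t) = 1" for t
    proof -
      have "\<psi> (1 + D * t) = \<psi> (1 + D * int (nat (t mod g)))"
      proof (rule dc_cong[OF dc])
        have "t mod g \<ge> 0" using g0 by simp
        then have e1: "1 + D * int (nat (t mod g)) - (1 + D * t) = D * (t mod g - t)" by (simp add: algebra_simps)
        have "t mod g - t = g * (-(t div g))" using div_mult_mod_eq[of t g] by (simp add: algebra_simps)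
        then obtain q where q: "t mod g - t = g * q" by blast
        have "1 + D * int (nat (t mod g)) - (1 + D * t) = int N * q" unfolding e1 q ND by (simp add: algebra_simps)
        then have dv: "int N dvd 1 + D * int (nat (t mod g)) - (1 + D * t)" by (metis dvd_triv_left)
        show "[1 + D * t = 1 + D * int (nat (t mod g))] (mod int N)"
          unfolding cong_iff_dvd_diff using dv dvd_diff_commute by blast
      qed
      also have "\<dots> = \<psi> (1 + D) ^ nat (t mod g)" by (rule psi_pow[OF dc NDD])
      finally show ?thesis using p1 by simp
    qed
    define d where "d = gcd (int Nstar) D"
    have d0: "d > 0" using Ns0 by (simp add: d_def)
    have triv: "\<forall>n. coprime n (int Nstar) \<and> [n = 1] (mod int (nat d)) \<longrightarrow> \<chi> n = 1"
    proof (intro allI impI)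
      fix n assume n: "coprime n (int Nstar) \<and> [n = 1] (mod int (nat d))"
      then have "d dvd n - 1" using d0 by (simp add: cong_iff_dvd_diff)
      then obtain k where k: "n - 1 = d * k" by blast
      obtain u v where uv: "u * int Nstar + v * D = d" using bezout_int[of "int Nstar" D] d_def by blast
      define n' where "n' = n + int Nstar * (-(u * k))"
      have "n = 1 + d * k" using k by simp
      also have "d * k = (u * int Nstar + v * D) * k" using uv by simp
      finally have n'1: "n' = 1 + D * (v * k)" unfolding n'_def by (simp add: algebra_simps)
      have "\<chi> n = \<chi> n'" unfolding n'_def by (rule dc_period[OF dcs, symmetric])
      also have "\<dots> = \<psi> n'" using psi1 n'1 by simp
      also have "\<dots> = 1" using allt n'1 by simp
      finally show "\<chi> n = 1" .
    qed
    have "d dvd int Nstar" unfolding d_def by simp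
    then have ddvd: "nat d dvd Nstar" using d0 by (simp add: nat_dvd_iff)
    then have "\<not> nat d < Nstar" using \<chi>(1) triv unfolding primitive_char_def by blast
    moreover have "nat d \<le> Nstar" using ddvd Ns0 by (simp add: dvd_imp_le)
    ultimately have "nat d = Nstar" by simp
    then have "d = int Nstar" using d0 by simp
    then show "int Nstar dvd D" unfolding d_def by (metis gcd_dvd2)
  qed
qed

lemma crit_equiv:
  fixes a b c d a' b' c' d' m :: int
  assumes ad: "a*d - b*c = 1" and ad': "a'*d' - b'*c' = 1" and dv: "int N dvd c'*d - c*d' - c*c'*m"
  shows "cusp_equiv N (ci a c) (ci a' c')"
proof -
  define p where "p = a'*d - (a'*m+b')*c"
  define q where "q = -(a'*b) + (a'*m+b')*a"
  define r where "r = c'*d - (c'*m+d')*c"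
  define s where "s = -(c'*b) + (c'*m+d')*a"
  have "p*s - q*r = (a'*d' - b'*c')*(a*d - b*c)" unfolding p_def q_def r_def s_def by (simp add: algebra_simps)
  then have det: "p*s - q*r = 1" using ad ad' by simp
  have rr: "r = c'*d - c*d' - c*c'*m" unfolding r_def by (simp add: algebra_simps)
  have G: "im p q r s \<in> Gamma0 N" using Gamma0_im[OF det] dv rr by simp
  have e1: "p*a + q*c = a'*(a*d - b*c)" unfolding p_def q_def by (simp add: algebra_simps)
  have e2: "r*a + s*c = c'*(a*d - b*c)" unfolding r_def s_def by (simp add: algebra_simps)
  have nz: "a \<noteq> 0 \<or> c \<noteq> 0" using coprime_nz[OF coprime_det[OF ad]] .
  have "mob (im p q r s) (ci a c) = ci a' c'" using mob_im[OF nz] e1 e2 ad by simp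
  then show ?thesis unfolding cusp_equiv_def using G by blast
qed

lemma coprime_Nunit:
  fixes p q r s :: int
  assumes "p*s - q*r = 1" "int N dvd r"
  shows "coprime s (int N)"
proof (rule coprimeI)
  fix k assume "k dvd s" "k dvd int N"
  then have "k dvd p*s - q*r" using assms(2) by (meson dvd_diff dvd_mult dvd_trans)
  then show "is_unit k" using assms(1) by simp
qed

lemma inv_gamma:
  fixes p q r s a c :: int
  assumes N1: "N \<ge> 1" and det: "p*s - q*r = 1" and rN: "int N dvd r" and cop: "coprime a c"
  shows "fN N (r*a+s*c) = fN N c" "uN N (p*a+q*c) (r*a+s*c) = uN N a c"
proof -
  obtain t where t: "r = int N * t" using rN by blast
  have cs: "coprime (int N) s" using coprime_Nunit[OF det rN] by (simp add: coprime_commute)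
  have "gcd (r*a+s*c) (int N) = gcd (int N) ((t*a) * int N + c*s)" using t by (simp add: algebra_simps gcd.commute)
  also have "\<dots> = gcd (int N) (c*s)" by (rule gcd_add_mult)
  also have "\<dots> = gcd (int N) c" using gcd_mult_right_right_cancel[OF cs] .
  finally show ff: "fN N (r*a+s*c) = fN N c" by (simp add: fN_def gcd.commute)
  define f where "f = fN N c"
  define g where "g = gN N c"
  define c1 where "c1 = c div f"
  define N1 where "N1 = int N div f"
  have f0: "f > 0" using struct(1)[OF N1 cop] f_def by simp
  have c: "c = f * c1" using struct(2)[OF N1 cop] f_def c1_def by simp
  have NN: "int N = f * N1" using struct(3)[OF N1 cop] f_def N1_def by simp
  have gf: "g dvd f" "g dvd N1" using struct(6,7)[OF N1 cop] g_def f_def N1_def by simp_all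
  define c1' where "c1' = N1*t*a + s*c1"
  have c': "r*a+s*c = f * c1'" unfolding c1'_def using t NN c by (simp add: algebra_simps)
  have c1'd: "(r*a+s*c) div f = c1'" using c' f0 by simp
  have gg: "gN N (r*a+s*c) = g" unfolding gN_def g_def ff ..
  have ps: "p*s = 1 + q*f*N1*t" using det t NN by (simp add: algebra_simps)
  have key: "(p*a+q*c)*c1' - a*c1 = N1*(p*a*a*t + q*f*t*a*c1) + f*(q*c1*c1')"
  proof -
    have "(p*a+q*c)*c1' - a*c1 = N1*(p*a*a*t) + (p*s)*(a*c1) + q*c*c1' - a*c1"
      unfolding c1'_def by (simp add: algebra_simps)
    also have "\<dots> = N1*(p*a*a*t + q*f*t*a*c1) + f*(q*c1*c1')" unfolding ps c by (simp add: algebra_simps)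
    finally show ?thesis .
  qed
  have "g dvd (p*a+q*c)*c1' - a*c1" unfolding key using gf by simp
  then have "((p*a+q*c)*c1' - 1) mod g = (a*c1 - 1) mod g" by (simp add: mod_eq_dvd_iff)
  then show "uN N (p*a+q*c) (r*a+s*c) = uN N a c"
    unfolding uN_def gg ff f_def[symmetric] g_def[symmetric] c1'd c1_def[symmetric] by simp
qed

lemma inv_neg:
  assumes N1: "N \<ge> 1" and cop: "coprime a c"
  shows "fN N (-c) = fN N c" "uN N (-a) (-c) = uN N a c"
proof -
  show f: "fN N (-c) = fN N c" by (simp add: fN_def)
  have c: "c = fN N c * (c div fN N c)" using struct(2)[OF N1 cop] .
  have f0: "fN N c > 0" using struct(1)[OF N1 cop] .
  have "-c = fN N c * (-(c div fN N c))" using c by simp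
  then have "(-c) div fN N c = -(c div fN N c)" using f0 by (metis nonzero_mult_div_cancel_left less_irrefl)
  then show "uN N (-a) (-c) = uN N a c" unfolding uN_def gN_def f by simp
qed

lemma inv_equiv:
  assumes N1: "N \<ge> 1" and cop: "coprime a c" and cop': "coprime a' c'"
    and eq: "cusp_equiv N (ci a c) (ci a' c')"
  shows "fN N c' = fN N c \<and> uN N a' c' = uN N a c"
proof -
  obtain \<gamma> where g: "\<gamma> \<in> Gamma0 N" "mob \<gamma> (ci a c) = ci a' c'" using eq unfolding cusp_equiv_def by blast
  obtain p q r s where gp: "\<gamma> = im p q r s" "p*s - q*r = 1" "int N dvd r" using Gamma0_E[OF g(1)] by blast
  have nz: "a \<noteq> 0 \<or> c \<noteq> 0" using coprime_nz[OF cop] .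
  have "ci (p*a+q*c) (r*a+s*c) = ci a' c'" using g(2) gp(1) mob_im[OF nz] by simp
  then have alt: "(a' = p*a+q*c \<and> c' = r*a+s*c) \<or> (a' = -(p*a+q*c) \<and> c' = -(r*a+s*c))"
    using ci_eq[OF coprime_image[OF gp(2) cop] cop'] by blast
  have cim: "coprime (p*a+q*c) (r*a+s*c)" using coprime_image[OF gp(2) cop] .
  note I = inv_gamma[OF N1 gp(2) gp(3) cop]
  from alt show ?thesis
  proof
    assume "a' = p*a+q*c \<and> c' = r*a+s*c" then show ?thesis using I by simp
  next
    assume "a' = -(p*a+q*c) \<and> c' = -(r*a+s*c)" then show ?thesis using I inv_neg[OF N1 cim] by simp
  qed
qed

lemma stepA:
  assumes N1: "N \<ge> 1" and cop: "coprime a c"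
  obtains a1 where "coprime a1 (fN N c)" "cusp_equiv N (ci a c) (ci a1 (fN N c))"
proof -
  define f where "f = fN N c"
  define c1 where "c1 = c div f"
  define N1 where "N1 = int N div f"
  have f0: "f > 0" using struct(1)[OF N1 cop] f_def by simp
  have c: "c = f * c1" using struct(2)[OF N1 cop] f_def c1_def by simp
  have NN: "int N = f * N1" using struct(3)[OF N1 cop] f_def N1_def by simp
  have cop1: "coprime c1 N1" using struct(4)[OF N1 cop] f_def c1_def N1_def by simp
  obtain b d where ad: "a*d - b*c = 1" using det_of_coprime[OF cop] by blast
  obtain c1i where c1i: "[c1 * c1i = 1] (mod N1)" using cong_solve_coprime_int[OF cop1] by blast
  obtain j where j: "c1 * c1i - 1 = N1 * j" using c1i unfolding cong_iff_dvd_diff by (meson dvd_def)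
  have cpi: "coprime c1i N1"
  proof (rule coprimeI)
    fix k assume "k dvd c1i" "k dvd N1"
    then have "k dvd c1 * c1i - N1 * j" by simp
    moreover have "c1 * c1i - N1 * j = 1" using j by simp
    ultimately show "is_unit k" by simp
  qed
  have cpd: "coprime d f"
  proof (rule coprimeI)
    fix k assume "k dvd d" "k dvd f"
    then have "k dvd a*d - b*c" using c by simp
    then show "is_unit k" using ad by simp
  qed
  have "coprime c1i (gcd N1 f)" using coprime_divisors[OF dvd_refl _ cpi] by simp
  moreover have "coprime d (gcd N1 f)" using coprime_divisors[OF dvd_refl _ cpd] by simp
  ultimately have "coprime (c1i * d) (gcd N1 f)" by simp
  then obtain d' where d': "[d' = c1i * d] (mod N1)" "coprime d' f"
    using lift_coprime[of f "c1i * d" N1] f0 by auto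
  obtain a1 b1 where a1: "d'*a1 - b1*f = 1" using det_of_coprime[OF d'(2)] by blast
  have ad1: "a1*d' - b1*f = 1" using a1 by (simp add: algebra_simps)
  obtain k where k: "d' - c1i * d = N1 * k" using d'(1) unfolding cong_iff_dvd_diff by (meson dvd_def)
  have "f*d - c*d' - c*f*0 = f * (N1 * (-(d*j) - c1*k))"
  proof -
    have "f*d - c*d' - c*f*0 = f * (d - c1*d')" using c by (simp add: algebra_simps)
    also have "d - c1*d' = -(d*(c1*c1i - 1)) - c1*(d' - c1i*d)" by (simp add: algebra_simps)
    also have "\<dots> = N1 * (-(d*j) - c1*k)" unfolding j k by (simp add: algebra_simps)
    finally show ?thesis .
  qed
  then have "int N dvd f*d - c*d' - c*f*0" using NN by (simp add: mult.assoc)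
  then have "cusp_equiv N (ci a c) (ci a1 f)" using crit_equiv[OF ad ad1] by blast
  moreover have "coprime a1 f" using coprime_det[OF ad1] .
  ultimately show ?thesis using that f_def by blast
qed

lemma stepB:
  fixes a1 a2 f :: int
  assumes f0: "f > 0" and fN: "f dvd int N" and c1: "coprime a1 f" and c2: "coprime a2 f"
    and cg: "[a1 = a2] (mod gcd f (int N div f))"
  shows "cusp_equiv N (ci a1 f) (ci a2 f)"
proof -
  define N1 where "N1 = int N div f"
  define g where "g = gcd f N1"
  have NN: "int N = f * N1" using fN by (simp add: N1_def)
  obtain b1 d1 where ad1: "a1*d1 - b1*f = 1" using det_of_coprime[OF c1] by blast
  obtain b2 d2 where ad2: "a2*d2 - b2*f = 1" using det_of_coprime[OF c2] by blast
  have gf: "g dvd f" unfolding g_def by simp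
  have cg1: "coprime a1 g" using coprime_divisors[OF dvd_refl gf c1] .
  obtain e where e: "a1 - a2 = g * e" using cg unfolding cong_iff_dvd_diff g_def N1_def by (meson dvd_def)
  have "a1*(d1 - d2) = (a1*d1 - b1*f) - (a2*d2 - b2*f) - (a1 - a2)*d2 + (b1 - b2)*f"
    by (simp add: algebra_simps)
  also have "\<dots> = g * (-(e*d2)) + (b1-b2)*f" unfolding ad1 ad2 e by (simp add: algebra_simps)
  finally have eqa: "a1*(d1 - d2) = g * (-(e*d2)) + (b1-b2)*f" .
  have "g dvd (b1-b2)*f" using gf by (rule dvd_mult)
  then have "g dvd g * (-(e*d2)) + (b1-b2)*f" by simp
  then have "g dvd a1*(d1 - d2)" unfolding eqa .
  then have "g dvd d1 - d2" using cg1 by (simp add: coprime_commute coprime_dvd_mult_right_iff)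
  then obtain k where k: "d1 - d2 = g * k" by blast
  obtain u v where uv: "u*f + v*N1 = g" using bezout_int[of f N1] g_def by blast
  have "f*d1 - f*d2 - f*f*(u*k) = f * (N1 * (v*k))"
  proof -
    have "f*d1 - f*d2 - f*f*(u*k) = f * ((d1 - d2) - f*(u*k))" by (simp add: algebra_simps)
    also have "(d1 - d2) - f*(u*k) = (u*f + v*N1)*k - f*(u*k)" unfolding k uv ..
    also have "\<dots> = N1*(v*k)" by (simp add: algebra_simps)
    finally show ?thesis .
  qed
  then have "int N dvd f*d1 - f*d2 - f*f*(u*k)" using NN by (simp add: mult.assoc)
  then show ?thesis using crit_equiv[OF ad1 ad2] by blast
qed

lemma complete:
  assumes N1: "N \<ge> 1" and cop: "coprime a c" and cop': "coprime a' c'"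
    and ff: "fN N c' = fN N c" and uu: "uN N a' c' = uN N a c"
  shows "cusp_equiv N (ci a c) (ci a' c')"
proof -
  define f where "f = fN N c"
  obtain a1 where A1: "coprime a1 f" "cusp_equiv N (ci a c) (ci a1 f)" using stepA[OF N1 cop] f_def by blast
  obtain a2 where A2: "coprime a2 f" "cusp_equiv N (ci a' c') (ci a2 f)" using stepA[OF N1 cop'] ff f_def by metis
  have I1: "fN N f = f \<and> uN N a1 f = uN N a c" using inv_equiv[OF N1 cop A1(1) A1(2)] f_def by simp
  have I2: "fN N f = f \<and> uN N a2 f = uN N a' c'" using inv_equiv[OF N1 cop' A2(1) A2(2)] ff f_def by simp
  have f0: "f > 0" using struct(1)[OF N1 cop] f_def by simp
  have fdN: "f dvd int N" unfolding f_def fN_def by simp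
  define g where "g = gcd f (int N div f)"
  have fNf: "fN N f = f" using I1 by simp
  have gN: "gN N f = g" unfolding gN_def g_def fNf ..
  have u1: "uN N a1 f = (a1 - 1) mod g + 1" unfolding uN_def gN fNf using f0 by simp
  have u2: "uN N a2 f = (a2 - 1) mod g + 1" unfolding uN_def gN fNf using f0 by simp
  have "(a1 - 1) mod g = (a2 - 1) mod g" using I1 I2 uu u1 u2 by simp
  then have "[a1 = a2] (mod g)" unfolding cong_iff_dvd_diff by (simp add: mod_eq_dvd_iff)
  then have "cusp_equiv N (ci a1 f) (ci a2 f)" using stepB[OF f0 fdN A1(1) A2(1)] g_def by simp
  then show ?thesis using A1(2) A2(2) equiv_sym equiv_trans by blast
qed

lemma sing_crit:
  assumes N1: "N \<ge> 1" and dc: "dirichlet_char N \<psi>" and ind: "induced_by_primitive N \<psi> Nstar"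
    and cop: "coprime a c"
  shows "singular_cusp N \<psi> (ci a c) \<longleftrightarrow> int Nstar dvd int N div gN N c"
proof -
  have "singular_cusp N \<psi> (ci a c) \<longleftrightarrow> \<psi> (1 + (int N div gN N c) * (a * (c div fN N c))) = 1"
    using singular_iff[OF N1 cop] struct(9)[OF N1 cop] by simp
  also have "\<dots> \<longleftrightarrow> int Nstar dvd int N div gN N c"
    by (rule char_crit[OF dc ind struct(5)[OF N1 cop] struct(10)[OF N1 cop] struct(8)[OF N1 cop]])
  finally show ?thesis .
qed

lemma conv_dvd:
  fixes N g Nstar :: nat
  assumes "g > 0" "g dvd N" "Nstar > 0" "Nstar dvd N"
  shows "int Nstar dvd int N div int g \<longleftrightarrow> g dvd N div Nstar"
proof -
  have "int Nstar dvd int N div int g \<longleftrightarrow> Nstar dvd N div g" by (simp flip: zdiv_int)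
  also have "\<dots> \<longleftrightarrow> Nstar * g dvd N" using assms by (simp add: dvd_div_iff_mult)
  also have "\<dots> \<longleftrightarrow> g * Nstar dvd N" by (simp add: mult.commute)
  also have "\<dots> \<longleftrightarrow> g dvd N div Nstar" using assms by (simp add: dvd_div_iff_mult)
  finally show ?thesis .
qed

lemma cusp_ci:
  assumes "is_cusp z" obtains a c where "coprime a c" "z = ci a c"
proof -
  have "z = None \<or> (\<exists>r\<in>\<rat>. z = Some r)" using assms by (simp add: is_cusp_def)
  then show ?thesis
  proof
    assume "z = None" then show ?thesis using that[of 1 0] by (simp add: ci_def cp_def)
  next
    assume "\<exists>r\<in>\<rat>. z = Some r"
    then obtain r where r: "r \<in> \<rat>" "z = Some r" by blast
    obtain a b where ab: "b > 0" "coprime a b" "r = of_int a / of_int b" using Rats_cases'[OF r(1)] by blast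
    have "z = ci a b" using ab r(2) by (simp add: ci_def cp_def)
    then show ?thesis using that ab(2) by blast
  qed
qed

lemma fN_nat:
  assumes "f dvd N" "N \<ge> 1"
  shows "fN N (int f) = int f" "gN N (int f) = int (gcd f (N div f))"
proof -
  show f: "fN N (int f) = int f" using assms by (simp add: fN_def gcd_nat.absorb1)
  show "gN N (int f) = int (gcd f (N div f))" unfolding gN_def f by (simp flip: zdiv_int)
qed

definition Arep :: "nat \<Rightarrow> nat \<Rightarrow> nat \<Rightarrow> int" where
  "Arep N f u = (SOME a. [a = int u] (mod int (gcd f (N div f))) \<and> coprime a (int f))"

lemma Arep:
  assumes f: "f dvd N" "N \<ge> 1" and u: "u \<in> totatives (gcd f (N div f))"
  shows "[Arep N f u = int u] (mod int (gcd f (N div f)))" "coprime (Arep N f u) (int f)"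
proof -
  define g where "g = gcd f (N div f)"
  have f0: "f > 0" using f by (cases f) auto
  have cu: "coprime u g" using u g_def by (simp add: in_totatives_iff)
  have "gcd (int g) (int f) = int g" unfolding g_def by (simp add: gcd_nat.absorb1)
  then have "coprime (int u) (gcd (int g) (int f))" using cu by simp
  then obtain y where "[y = int u] (mod int g)" "coprime y (int f)"
    using lift_coprime[of "int f" "int u" "int g"] f0 by auto
  then have ex: "\<exists>a. [a = int u] (mod int g) \<and> coprime a (int f)" by blast
  show "[Arep N f u = int u] (mod int (gcd f (N div f)))" "coprime (Arep N f u) (int f)"
    using someI_ex[OF ex] unfolding Arep_def g_def by auto
qed

lemma uN_Arep:
  assumes f: "f dvd N" "N \<ge> 1" and u: "u \<in> totatives (gcd f (N div f))"
  shows "uN N (Arep N f u) (int f) = int u"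
proof -
  define g where "g = gcd f (N div f)"
  have f0: "f > 0" using f by (cases f) auto
  have ug: "u > 0" "u \<le> g" using u g_def by (auto simp: in_totatives_iff)
  have "(Arep N f u - 1) mod int g = (int u - 1) mod int g"
    using Arep(1)[OF f u] unfolding g_def[symmetric] cong_def by (metis mod_diff_left_eq)
  also have "\<dots> = int u - 1" using ug by simp
  finally show ?thesis unfolding uN_def fN_nat[OF f] using f0 g_def by simp
qed

lemma main_count:
  fixes N Nstar :: nat and k :: int and \<psi> :: "int \<Rightarrow> complex"
  assumes N1: "N \<ge> 1"
    and dc: "dirichlet_char N \<psi>"
    and ind: "induced_by_primitive N \<psi> Nstar"
  shows "card (singular_cusp_classes N \<psi>) =
         (\<Sum>f | f dvd N \<and> gcd f (N div f) dvd (N div Nstar). totient (gcd f (N div f)))"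
proof -
  define Fs where "Fs = {f. f dvd N \<and> gcd f (N div f) dvd (N div Nstar)}"
  define S where "S = (SIGMA f:Fs. totatives (gcd f (N div f)))"
  define rep where "rep = (\<lambda>(f,u). ci (Arep N f u) (int f))"
  define F where "F = (\<lambda>x. {w. cusp_equiv N (rep x) w})"
  have NsN: "Nstar dvd N" using ind by (simp add: induced_by_primitive_def)
  have Ns0: "Nstar > 0"
  proof -
    obtain \<chi> where "primitive_char Nstar \<chi>" using ind unfolding induced_by_primitive_def by blast
    then show ?thesis by (simp add: primitive_char_def dirichlet_char_def)
  qed
  have N0: "N > 0" using N1 by simp
  have finFs: "finite Fs" unfolding Fs_def using finite_divisors_nat[OF N0] by (rule rev_finite_subset) auto
  have fpos: "f > 0" if "f dvd N" for f :: nat using that N0 by (cases f) auto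
  have gpos: "gcd f (N div f) > 0" if "f dvd N" for f
    using fpos[OF that] by simp
  have condS: "singular_cusp N \<psi> (rep (f,u))" if "(f,u) \<in> S" for f u
  proof -
    have f: "f dvd N" "gcd f (N div f) dvd (N div Nstar)" "u \<in> totatives (gcd f (N div f))"
      using that unfolding S_def Fs_def by auto
    have gdN: "gcd f (N div f) dvd N" using f(1) by (meson dvd_trans gcd_dvd1)
    have "int Nstar dvd int N div gN N (int f)"
      unfolding fN_nat(2)[OF f(1) N1] using conv_dvd[OF gpos[OF f(1)] gdN Ns0 NsN] f(2) by simp
    then show ?thesis unfolding rep_def using sing_crit[OF N1 dc ind Arep(2)[OF f(1) N1 f(3)]] by simp
  qed
  have img: "singular_cusp_classes N \<psi> = F ` S"
  proof (intro equalityI subsetI)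
    fix X assume "X \<in> singular_cusp_classes N \<psi>"
    then obtain z where z: "X = {w. cusp_equiv N z w}" "is_cusp z" "singular_cusp N \<psi> z"
      unfolding singular_cusp_classes_def mem_Collect_eq by auto
    obtain a c where ac: "coprime a c" "z = ci a c" using cusp_ci[OF z(2)] by blast
    define f where "f = nat (fN N c)"
    define u where "u = nat (uN N a c)"
    have f0: "fN N c > 0" using struct(1)[OF N1 ac(1)] .
    have fi: "int f = fN N c" using f0 f_def by simp
    have "int f dvd int N" unfolding fi fN_def by simp
    then have fd: "f dvd N" by simp
    have gi: "gN N c = int (gcd f (N div f))" using fN_nat(2)[OF fd N1] fN_nat(1)[OF fd N1] fi
      by (simp add: gN_def)
    have sing: "int Nstar dvd int N div gN N c" using sing_crit[OF N1 dc ind ac(1)] z(3) ac(2) by simp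
    have gdN: "gcd f (N div f) dvd N" using fd by (meson dvd_trans gcd_dvd1)
    have c2: "gcd f (N div f) dvd N div Nstar"
      using conv_dvd[OF gpos[OF fd] gdN Ns0 NsN] sing gi by simp
    define g where "g = gN N c"
    have g0: "g > 0" using struct(5)[OF N1 ac(1)] g_def by simp
    define x where "x = a * (c div fN N c)"
    have cx: "coprime x g" using struct(8)[OF N1 ac(1)] x_def g_def by simp
    have uNd: "uN N a c = (x - 1) mod g + 1" unfolding uN_def x_def g_def ..
    have "(x - 1) mod g < g" "(x - 1) mod g \<ge> 0" using g0 by simp_all
    then have u1: "uN N a c \<ge> 1" "uN N a c \<le> g" using uNd by auto
    have ui: "int u = uN N a c" using u1 u_def by simp
    have "gcd g (uN N a c) = gcd g x"
    proof -
      have eq: "uN N a c = (-((x - 1) div g)) * g + x" unfolding uNd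
        using div_mult_mod_eq[of "x - 1" g] by (simp add: algebra_simps)
      show ?thesis unfolding eq by (rule gcd_add_mult)
    qed
    moreover have "gcd g x = 1" using cx by (simp add: coprime_commute)
    ultimately have "gcd (uN N a c) g = 1" by (simp add: gcd.commute)
    then have "gcd (int u) (int (gcd f (N div f))) = 1" using ui gi g_def by simp
    then have "int (gcd u (gcd f (N div f))) = 1" by (simp only: gcd_int_int_eq)
    then have "gcd u (gcd f (N div f)) = 1" by linarith
    then have "coprime u (gcd f (N div f))" by (rule coprime_iff_gcd_eq_1[THEN iffD2])
    moreover have "u > 0" "u \<le> gcd f (N div f)"
    proof -
      have gg: "g = int (gcd f (N div f))" using gi g_def by simp
      have "int u \<ge> 1" "int u \<le> int (gcd f (N div f))" using u1 ui gg by simp_all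
      then show "u > 0" "u \<le> gcd f (N div f)" by simp_all
    qed
    ultimately have uT: "u \<in> totatives (gcd f (N div f))" by (simp add: in_totatives_iff)
    have S: "(f,u) \<in> S" unfolding S_def Fs_def using fd c2 uT by (intro SigmaI) simp_all
    have h1: "fN N (int f) = fN N c" using fN_nat(1)[OF fd N1] fi by simp
    have h2: "uN N (Arep N f u) (int f) = uN N a c" using uN_Arep[OF fd N1 uT] ui by simp
    have "cusp_equiv N (ci a c) (ci (Arep N f u) (int f))"
      by (rule complete[OF N1 ac(1) Arep(2)[OF fd N1 uT] h1 h2])
    then have "cusp_equiv N (ci a c) (rep (f,u))" unfolding rep_def by simp
    then have "X = F (f,u)" unfolding F_def z(1) ac(2) by (rule orbit_eq)
    then show "X \<in> F ` S" using S by blast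
  next
    fix X assume "X \<in> F ` S"
    then obtain x where x: "x \<in> S" "X = F x" by blast
    obtain f u where xfu: "x = (f,u)" by (cases x)
    have fu: "(f,u) \<in> S" "X = F (f,u)" using x xfu by simp_all
    have f: "f dvd N" using fu(1) unfolding S_def Fs_def by auto
    have r: "rep (f,u) = Some (of_int (Arep N f u) / of_int (int f))"
      unfolding rep_def ci_def cp_def using fpos[OF f] by simp
    have "of_int (Arep N f u) / of_int (int f) \<in> (\<rat> :: real set)"
      by (intro Rats_divide Rats_of_int)
    then have "is_cusp (rep (f,u))" unfolding is_cusp_def r by blast
    then have "is_cusp (rep (f,u)) \<and> singular_cusp N \<psi> (rep (f,u))" using condS[OF fu(1)] by simp
    then show "X \<in> singular_cusp_classes N \<psi>" unfolding singular_cusp_classes_def fu(2) F_def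
      by (intro CollectI exI[of _ "rep (f,u)"]) simp
  qed
  have inj: "inj_on F S"
  proof (rule inj_onI)
    fix x y assume x: "x \<in> S" and y: "y \<in> S" and e: "F x = F y"
    obtain f u where xf: "x = (f,u)" by (cases x)
    obtain f' u' where yf: "y = (f',u')" by (cases y)
    have f: "f dvd N" "u \<in> totatives (gcd f (N div f))" using x xf unfolding S_def Fs_def by auto
    have f': "f' dvd N" "u' \<in> totatives (gcd f' (N div f'))" using y yf unfolding S_def Fs_def by auto
    have "rep y \<in> F y" unfolding F_def by (simp add: equiv_refl)
    then have "rep y \<in> F x" using e by simp
    then have "cusp_equiv N (rep x) (rep y)" unfolding F_def by simp
    then have "cusp_equiv N (ci (Arep N f u) (int f)) (ci (Arep N f' u') (int f'))"
      unfolding xf yf rep_def by simp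
    then have I: "fN N (int f') = fN N (int f) \<and> uN N (Arep N f' u') (int f') = uN N (Arep N f u) (int f)"
      by (rule inv_equiv[OF N1 Arep(2)[OF f(1) N1 f(2)] Arep(2)[OF f'(1) N1 f'(2)]])
    have "int f' = int f" using I fN_nat(1)[OF f(1) N1] fN_nat(1)[OF f'(1) N1] by simp
    then have ff: "f' = f" by simp
    have "int u' = int u" using I uN_Arep[OF f(1) N1 f(2)] uN_Arep[OF f'(1) N1 f'(2)] ff by simp
    then have "u' = u" by simp
    then show "x = y" using xf yf ff by simp
  qed
  have "card (singular_cusp_classes N \<psi>) = card S" using img card_image[OF inj] by simp
  also have "\<dots> = (\<Sum>f\<in>Fs. card (totatives (gcd f (N div f))))" unfolding S_def
    using finFs by simp
  also have "\<dots> = (\<Sum>f\<in>Fs. totient (gcd f (N div f)))" by (simp add: totient_def)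
  finally show ?thesis unfolding Fs_def .
qed

theorem corollary5p5:
  fixes N Nstar :: nat and k :: int and \<psi> :: "int \<Rightarrow> complex"
  assumes "N \<ge> 1"
    and "dirichlet_char N \<psi>"
    and "\<psi> (-1) = (-1) powi k"
    and "induced_by_primitive N \<psi> Nstar"
  shows "card (singular_cusp_classes N \<psi>) =
         (\<Sum>f | f dvd N \<and> gcd f (N div f) dvd (N div Nstar). totient (gcd f (N div f)))"
  using main_count[OF assms(1,2,4)] .

end
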